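(* Let $0<\mu<1/2$ and $\Psi(\xi,\eta)=-\frac34\eta(\eta-2\xi)^2$. For every $M\ge1$, $$\sup_{\xi,\alpha\in\mathbb R}\int_{\mathbb R}\max(|\xi|,|\eta|)\frac{\langle\xi\rangle^\mu}{|\eta|^{1/2}\langle\xi-\eta\rangle^\mu}\mathbb 1_{|\Psi(\xi,\eta)-\alpha|<M}\,d\eta\lesssim\sqrt M.$$
   Context: $\langle\xi\rangle=(1+\xi^2)^{1/2}$. Implicit constants depend only on $\mu$. *)

theory Defs
  imports "HOL-Analysis.Analysis"
begin

definition japbr :: "real \<Rightarrow> real" where
  "japbr x = sqrt (1 + x\<^sup>2)"

definition Psi :: "real \<Rightarrow> real \<Rightarrow> real" where
  "Psi \<xi> \<eta> = - (3/4) * \<eta> * (\<eta> - 2 * \<xi>)\<^sup>2"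

end

theory Submission
  imports Defs
begin

lemma piece_bound:
  fixes \<phi> \<phi>' f :: "real \<Rightarrow> real"
  assumes cd: "c \<le> d"
    and cont: "continuous_on {c..d} \<phi>"
    and der: "\<And>t. t \<in> {c<..<d} \<Longrightarrow> (\<phi> has_real_derivative \<phi>' t) (at t)"
    and nn: "\<And>t. t \<in> {c<..<d} \<Longrightarrow> 0 \<le> \<phi>' t"
    and fb: "\<And>t. t \<in> {c<..<d} \<Longrightarrow> f t \<le> L * \<phi>' t"
    and diam: "\<And>a b. a \<in> S \<Longrightarrow> b \<in> S \<Longrightarrow> \<bar>\<phi> a - \<phi> b\<bar> \<le> D"
    and Ssub: "S \<subseteq> {c<..<d}" and L: "0 \<le> L"
  shows "(\<integral>\<^sup>+t. ennreal (f t) * indicator S t \<partial>lborel) \<le> ennreal (L * D)"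
proof (cases "S = {}")
  case True
  then show ?thesis by simp
next
  case False
  define u where "u = Inf S"
  define v where "v = Sup S"
  have bb1: "bdd_below S" using Ssub by (intro bdd_belowI[where m=c]) auto
  have bb2: "bdd_above S" using Ssub by (intro bdd_aboveI[where M=d]) auto
  note bb = bb1 bb2
  have uS: "u \<le> t" "t \<le> v" if "t \<in> S" for t
    using that bb unfolding u_def v_def by (auto intro: cInf_lower cSup_upper)
  have ucl: "u \<in> closure S" unfolding u_def by (rule closure_contains_Inf[OF False bb(1)])
  have vcl: "v \<in> closure S" unfolding v_def by (rule closure_contains_Sup[OF False bb(2)])
  have clS: "closure S \<subseteq> {c..d}"
    using Ssub by (intro closure_minimal) auto
  have cl1: "closure S \<subseteq> {c..d} \<inter> \<phi> -` cball (\<phi> b) D" if "b \<in> S" for b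
    using diam[OF _ that] Ssub
    by (intro closure_minimal continuous_closed_preimage[OF cont]) (auto simp: dist_real_def abs_minus_commute)
  have cl2: "closure S \<subseteq> {c..d} \<inter> \<phi> -` cball (\<phi> a) D" if a: "a \<in> closure S" for a
  proof (intro closure_minimal continuous_closed_preimage[OF cont])
    show "S \<subseteq> {c..d} \<inter> \<phi> -` cball (\<phi> a) D"
    proof
      fix x assume x: "x \<in> S"
      have "a \<in> \<phi> -` cball (\<phi> x) D" using cl1[OF x] a by blast
      then show "x \<in> {c..d} \<inter> \<phi> -` cball (\<phi> a) D" using x Ssub by (auto simp: dist_real_def abs_minus_commute)
    qed
  qed auto
  have "\<phi> v - \<phi> u \<le> D"
    using cl2[OF ucl] vcl by (auto simp: dist_real_def)
  have uv: "u \<le> v" using False uS by force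
  have cuv: "c \<le> u" "v \<le> d" using ucl vcl clS by auto
  have ftc: "(\<phi>' has_integral (\<phi> v - \<phi> u)) {u..v}"
    apply (rule fundamental_theorem_of_calculus_interior[OF uv])
    using cont cuv apply (meson atLeastatMost_subset_iff continuous_on_subset)
    using der cuv by (auto simp: has_real_derivative_iff_has_vector_derivative[symmetric])
  then have ftc2: "((\<lambda>t. L * \<phi>' t) has_integral (L * (\<phi> v - \<phi> u))) {u<..<v}"
    using has_integral_Icc_iff_Ioo has_integral_mult_right by blast
  have eq: "(\<integral>\<^sup>+t. ennreal (L * \<phi>' t) * indicator {u<..<v} t \<partial>lborel) = ennreal (L * (\<phi> v - \<phi> u))"
    by (rule nn_integral_has_integral_lebesgue'[OF _ ftc2]) (use nn cuv L in auto)
  have "(\<integral>\<^sup>+t. ennreal (f t) * indicator S t \<partial>lborel) \<le> (\<integral>\<^sup>+t. ennreal (L * \<phi>' t) * indicator {u<..<v} t \<partial>lborel)"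
  proof (rule nn_integral_mono_AE)
    have "AE t in lborel. t \<noteq> u" "AE t in lborel. t \<noteq> v" by (rule AE_lborel_singleton)+
    then show "AE t in lborel. ennreal (f t) * indicator S t \<le> ennreal (L * \<phi>' t) * indicator {u<..<v} t"
    proof eventually_elim
      case (elim t)
      show ?case
      proof (cases "t \<in> S")
        case True
        then have "u < t" "t < v" using uS[OF True] elim by auto
        moreover have "f t \<le> L * \<phi>' t" using True fb[of t] Ssub by auto
        ultimately show ?thesis using True by (auto simp: indicator_def intro: ennreal_leI)
      qed auto
    qed
  qed
  also have "\<dots> = ennreal (L * (\<phi> v - \<phi> u))" by (rule eq)
  also have "\<dots> \<le> ennreal (L * D)"
    using \<open>\<phi> v - \<phi> u \<le> D\<close> L by (intro ennreal_leI mult_left_mono) auto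
  finally show ?thesis .
qed

lemma piece_E:
  fixes \<phi> \<phi>' f G :: "real \<Rightarrow> real"
  assumes cd: "c \<le> d"
    and cont: "continuous_on {c..d} \<phi>"
    and der: "\<And>t. t \<in> {c<..<d} \<Longrightarrow> (\<phi> has_real_derivative \<phi>' t) (at t)"
    and nn: "\<And>t. t \<in> {c<..<d} \<Longrightarrow> 0 \<le> \<phi>' t"
    and fb: "\<And>t. t \<in> {c<..<d} \<Longrightarrow> f t \<le> 12 * \<phi>' t"
    and sq: "\<And>a b. a \<in> {c<..<d} \<Longrightarrow> b \<in> {c<..<d} \<Longrightarrow> (\<phi> a - \<phi> b)\<^sup>2 \<le> 3 * \<bar>G a - G b\<bar>"
  shows "(\<integral>\<^sup>+t. ennreal (f t) * indicator ({t. \<bar>G t - \<alpha>\<bar> < M} \<inter> {c<..<d}) t \<partial>lborel) \<le> ennreal (12 * sqrt (6 * M))"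
proof (rule piece_bound[OF cd cont der nn fb])
  fix a b assume a: "a \<in> {t. \<bar>G t - \<alpha>\<bar> < M} \<inter> {c<..<d}" and b: "b \<in> {t. \<bar>G t - \<alpha>\<bar> < M} \<inter> {c<..<d}"
  have "\<bar>G a - G b\<bar> < 2 * M" using a b by auto
  then have "\<bar>\<phi> a - \<phi> b\<bar>\<^sup>2 \<le> 6 * M" using sq[of a b] a b by auto
  then show "\<bar>\<phi> a - \<phi> b\<bar> \<le> sqrt (6 * M)" by (rule real_le_rsqrt)
qed auto

lemma same_sign_sq:
  fixes p q :: real
  assumes "0 \<le> p * q"
  shows "(p - q)\<^sup>2 \<le> \<bar>p\<^sup>2 - q\<^sup>2\<bar>"
proof -
  have "\<bar>p - q\<bar> \<le> \<bar>p + q\<bar>" using assms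
    by (cases "0 \<le> p"; cases "0 \<le> q") (auto simp: zero_le_mult_iff)
  then have "\<bar>p - q\<bar> * \<bar>p - q\<bar> \<le> \<bar>p - q\<bar> * \<bar>p + q\<bar>" by (rule mult_left_mono) auto
  also have "\<dots> = \<bar>p\<^sup>2 - q\<^sup>2\<bar>" by (simp add: power2_eq_square abs_mult[symmetric] algebra_simps)
  finally show ?thesis by (simp add: power2_eq_square abs_mult_self_eq)
qed

lemma sqrt_diff_sq:
  fixes p q :: real
  assumes "0 \<le> p" "0 \<le> q"
  shows "(sqrt p - sqrt q)\<^sup>2 \<le> \<bar>p - q\<bar>"
proof -
  have "(sqrt p - sqrt q)\<^sup>2 \<le> \<bar>(sqrt p)\<^sup>2 - (sqrt q)\<^sup>2\<bar>"
    by (rule same_sign_sq) (use assms in simp)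
  then show ?thesis using assms by simp
qed

lemma sqrt_mul_self_c: "0 \<le> a \<Longrightarrow> sqrt a * (sqrt a * c) = a * c"
proof -
  assume "0 \<le> a"
  have "sqrt a * (sqrt a * c) = (sqrt a * sqrt a) * c" by (rule mult.assoc[symmetric])
  then show ?thesis using \<open>0 \<le> a\<close> by simp
qed
lemma japbr_sq: "(japbr x)\<^sup>2 = 1 + x\<^sup>2"
  unfolding japbr_def by (intro real_sqrt_pow2 add_nonneg_nonneg) auto
lemma japbr_pos: "0 < japbr x"
  unfolding japbr_def by (intro real_sqrt_gt_zero add_pos_nonneg) auto
definition wgt :: "real \<Rightarrow> real \<Rightarrow> real \<Rightarrow> real" where
  "wgt \<mu> x t = max \<bar>x\<bar> \<bar>t\<bar> * japbr x powr \<mu> / (\<bar>t\<bar> powr (1/2) * japbr (x - t) powr \<mu>)"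
lemma wgt_nonneg: "0 \<le> wgt \<mu> x t"
  unfolding wgt_def by (intro divide_nonneg_nonneg mult_nonneg_nonneg) auto
lemma wgt_eq:
  assumes "t \<noteq> 0"
  shows "wgt \<mu> x t = max (\<bar>x\<bar>) (\<bar>t\<bar>) * (japbr x / japbr (x - t)) powr \<mu> / sqrt \<bar>t\<bar>"
proof -
  have 1: "\<bar>t\<bar> powr (1/2) = sqrt \<bar>t\<bar>" by (simp add: powr_half_sqrt)
  have 2: "(japbr x / japbr (x - t)) powr \<mu> = japbr x powr \<mu> / japbr (x - t) powr \<mu>"
    by (intro powr_divide less_imp_le japbr_pos)
  show ?thesis unfolding wgt_def 1 2 by (simp add: field_simps)
qed
lemma wgt_le:
  assumes "t \<noteq> 0" and B: "(japbr x / japbr (x - t)) powr \<mu> \<le> B"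
  shows "wgt \<mu> x t \<le> max (\<bar>x\<bar>) (\<bar>t\<bar>) * B / sqrt \<bar>t\<bar>"
  unfolding wgt_eq[OF assms(1)] by (intro divide_right_mono mult_left_mono B) auto

lemma powr_le_max1:
  fixes R \<mu> :: real
  assumes "0 < R" "0 \<le> \<mu>" "\<mu> \<le> 1"
  shows "R powr \<mu> \<le> max 1 R"
proof (cases "R \<le> 1")
  case True
  then have "R powr \<mu> \<le> 1" using assms by (intro powr_le1) auto
  then show ?thesis by simp
next
  case False
  then have "R powr \<mu> \<le> R powr 1" using assms by (intro powr_mono) auto
  then show ?thesis using assms by simp
qed

lemma powr_le_max_sqrt:
  fixes R \<mu> :: real
  assumes "0 < R" "0 \<le> \<mu>" "\<mu> \<le> 1/2"
  shows "R powr \<mu> \<le> max 1 (sqrt R)"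
proof (cases "R \<le> 1")
  case True
  then have "R powr \<mu> \<le> 1" using assms by (intro powr_le1) auto
  then show ?thesis by simp
next
  case False
  then have "R powr \<mu> \<le> R powr (1/2)" using assms by (intro powr_mono) auto
  then show ?thesis using assms by (simp add: powr_half_sqrt)
qed

lemma V_le6:
  assumes "0 < \<mu>" "\<mu> < 1/2" "\<bar>x\<bar> \<le> 6 * \<bar>x - t\<bar>"
  shows "(japbr x / japbr (x - t)) powr \<mu> \<le> 6"
proof -
  have "\<bar>x\<bar>\<^sup>2 \<le> (6 * \<bar>x - t\<bar>)\<^sup>2" using assms(3) by (intro power_mono) auto
  then have "x\<^sup>2 \<le> 36 * (x - t)\<^sup>2" by (simp add: power_mult_distrib)
  then have "1 + x\<^sup>2 \<le> 6\<^sup>2 * (1 + (x - t)\<^sup>2)" by simp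
  then have "sqrt (1 + x\<^sup>2) \<le> sqrt (6\<^sup>2 * (1 + (x - t)\<^sup>2))" by (rule real_sqrt_le_mono)
  also have "\<dots> = 6 * sqrt (1 + (x - t)\<^sup>2)" by (subst real_sqrt_mult) simp
  finally have "japbr x \<le> 6 * japbr (x - t)" unfolding japbr_def .
  then have R: "japbr x / japbr (x - t) \<le> 6" using japbr_pos[of "x - t"] by (simp add: divide_le_eq)
  have "(japbr x / japbr (x - t)) powr \<mu> \<le> max 1 (japbr x / japbr (x - t))"
    using assms japbr_pos[of x] japbr_pos[of "x - t"] by (intro powr_le_max1) auto
  then show ?thesis using R by simp
qed

lemma V_sq_near:
  assumes "0 < \<mu>" "\<mu> < 1/2" "0 \<le> x" "\<bar>s\<bar> \<le> x"
  shows "((japbr x / japbr s) powr \<mu>)\<^sup>2 * \<bar>s\<bar> \<le> 2 * x"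
proof -
  define R where "R = japbr x / japbr s"
  have R0: "0 < R" unfolding R_def using japbr_pos[of x] japbr_pos[of s] by simp
  have V: "R powr \<mu> \<le> max 1 (sqrt R)" using assms R0 by (intro powr_le_max_sqrt) auto
  have V0: "0 \<le> R powr \<mu>" by simp
  have "(R powr \<mu>)\<^sup>2 \<le> (max 1 (sqrt R))\<^sup>2" using V V0 by (intro power_mono) auto
  also have "\<dots> = max 1 R" using R0 by (auto simp: max_def)
  finally have V2: "(R powr \<mu>)\<^sup>2 \<le> max 1 R" .
  have "(1 + x\<^sup>2) * s\<^sup>2 \<le> 4 * x\<^sup>2 * (1 + s\<^sup>2)"
  proof -
    have "s\<^sup>2 \<le> x\<^sup>2" using assms(4) assms(3) by (simp add: abs_le_square_iff[symmetric])
    moreover have "0 \<le> x\<^sup>2 * s\<^sup>2" by simp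
    moreover have "0 \<le> x\<^sup>2" by simp
    moreover have "(1 + x\<^sup>2) * s\<^sup>2 = s\<^sup>2 + x\<^sup>2 * s\<^sup>2" by (simp add: ring_distribs)
    moreover have "4 * x\<^sup>2 * (1 + s\<^sup>2) = 4 * x\<^sup>2 + 4 * (x\<^sup>2 * s\<^sup>2)" by (simp add: ring_distribs)
    ultimately show ?thesis by (smt (verit))
  qed
  then have "sqrt ((1 + x\<^sup>2) * s\<^sup>2) \<le> sqrt (4 * x\<^sup>2 * (1 + s\<^sup>2))" by (rule real_sqrt_le_mono)
  moreover have "sqrt ((1 + x\<^sup>2) * s\<^sup>2) = japbr x * \<bar>s\<bar>"
    unfolding japbr_def by (simp only: real_sqrt_mult real_sqrt_abs)
  moreover have "sqrt (4 * x\<^sup>2 * (1 + s\<^sup>2)) = 2 * x * japbr s"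
  proof -
    have "sqrt (4 * x\<^sup>2 * (1 + s\<^sup>2)) = sqrt ((2 * x)\<^sup>2) * sqrt (1 + s\<^sup>2)"
      by (simp only: real_sqrt_mult power_mult_distrib) simp
    also have "\<dots> = \<bar>2 * x\<bar> * sqrt (1 + s\<^sup>2)" by (simp only: real_sqrt_abs)
    also have "\<dots> = 2 * x * japbr s" using assms(3) unfolding japbr_def by simp
    finally show ?thesis .
  qed
  ultimately have "japbr x * \<bar>s\<bar> \<le> 2 * x * japbr s" by simp
  then have Rs: "R * \<bar>s\<bar> \<le> 2 * x" unfolding R_def using japbr_pos[of s]
    by (simp add: divide_le_eq)
  have "(R powr \<mu>)\<^sup>2 * \<bar>s\<bar> \<le> max 1 R * \<bar>s\<bar>" using V2 by (simp add: mult_right_mono)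
  also have "\<dots> \<le> 2 * x" using Rs assms by (auto simp: max_def)
  finally show ?thesis unfolding R_def .
qed
lemma piece_sq:
  fixes pa pb Ga Gb k cc :: real
  assumes "0 \<le> pa * pb" "pa\<^sup>2 = k * Ga + cc" "pb\<^sup>2 = k * Gb + cc" "\<bar>k\<bar> \<le> 3"
  shows "(pa - pb)\<^sup>2 \<le> 3 * \<bar>Ga - Gb\<bar>"
proof -
  have "(pa - pb)\<^sup>2 \<le> \<bar>pa\<^sup>2 - pb\<^sup>2\<bar>" by (rule same_sign_sq[OF assms(1)])
  also have "\<dots> = \<bar>k\<bar> * \<bar>Ga - Gb\<bar>" using assms(2,3) by (simp add: abs_mult[symmetric] algebra_simps)
  also have "\<dots> \<le> 3 * \<bar>Ga - Gb\<bar>" using assms(4) by (intro mult_right_mono) auto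
  finally show ?thesis .
qed

lemma cmp_helper:
  fixes A B s1 s2 :: real
  assumes "0 < s1" "0 < s2" "0 \<le> A" "0 \<le> B" "A\<^sup>2 * s2 \<le> 36 * B\<^sup>2 * s1"
  shows "A / sqrt s1 \<le> 12 * (B / (2 * sqrt s2))"
proof -
  have "sqrt (A\<^sup>2 * s2) \<le> sqrt (36 * B\<^sup>2 * s1)" using assms(5) by (rule real_sqrt_le_mono)
  moreover have "sqrt (A\<^sup>2 * s2) = A * sqrt s2" using assms by (simp add: real_sqrt_mult)
  moreover have "sqrt (36 * B\<^sup>2 * s1) = 6 * B * sqrt s1"
  proof -
    have "sqrt (36 * B\<^sup>2 * s1) = sqrt ((6 * B)\<^sup>2) * sqrt s1" by (simp add: real_sqrt_mult power_mult_distrib)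
    also have "\<dots> = \<bar>6 * B\<bar> * sqrt s1" by (simp only: real_sqrt_abs)
    finally show ?thesis using assms by simp
  qed
  ultimately have le: "A * sqrt s2 \<le> 6 * B * sqrt s1" by simp
  have "A / sqrt s1 \<le> 6 * B / sqrt s2"
    using le assms by (simp add: divide_simps mult.commute)
  then show ?thesis by simp
qed

lemma d1: "t < 0 \<Longrightarrow> ((\<lambda>t. - (sqrt (- t) * (2 * x - t))) has_real_derivative (2 * x - 3 * t) / (2 * sqrt (- t))) (at t)"
  apply (rule derivative_eq_intros refl | simp)+
  apply (auto simp: field_simps sqrt_mul_self_c)
  done

lemma d2: "0 < t \<Longrightarrow> ((\<lambda>t. sqrt t * (2 * x - t)) has_real_derivative (2 * x - 3 * t) / (2 * sqrt t)) (at t)"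
  apply (rule derivative_eq_intros refl | simp)+
  apply (auto simp: field_simps sqrt_mul_self_c)
  done

lemma d3: "t < 8 * x / 3 \<Longrightarrow> ((\<lambda>t. (t - 2 * x / 3) * sqrt (8 * x / 3 - t)) has_real_derivative (6 * x - 3 * t) / (2 * sqrt (8 * x / 3 - t))) (at t)"
  apply (rule derivative_eq_intros refl | simp)+
  apply (auto simp: field_simps sqrt_mul_self_c)
  done

lemma d5: "t < x \<Longrightarrow> ((\<lambda>t. - (x * sqrt (x - t))) has_real_derivative x / (2 * sqrt (x - t))) (at t)"
  apply (rule derivative_eq_intros refl | simp)+
  apply (simp add: field_simps)
  done

lemma d6: "x < t \<Longrightarrow> ((\<lambda>t. x * sqrt (t - x)) has_real_derivative x / (2 * sqrt (t - x))) (at t)"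
  apply (rule derivative_eq_intros refl | simp)+
  apply (simp add: field_simps)
  done

lemma d7: "0 < t \<Longrightarrow> ((\<lambda>t. sqrt t * (t - 2 * x)) has_real_derivative (3 * t - 2 * x) / (2 * sqrt t)) (at t)"
  apply (rule derivative_eq_intros refl | simp)+
  apply (auto simp: field_simps sqrt_mul_self_c)
  done
lemma psi_diff: "Psi x a - Psi x b = - (3/4) * (a - b) * (a\<^sup>2 + a * b + b\<^sup>2 - 4 * x * (a + b) + 4 * x\<^sup>2)"
  unfolding Psi_def power2_eq_square by algebra

lemma psi_lip:
  fixes x a b :: real
  assumes x: "0 \<le> x" and a: "\<bar>a - x\<bar> \<le> x / 6" and b: "\<bar>b - x\<bar> \<le> x / 6"
  shows "x\<^sup>2 * \<bar>a - b\<bar> \<le> 3 * \<bar>Psi x a - Psi x b\<bar>"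
proof -
  define p where "p = a - x"
  define q where "q = b - x"
  have pa: "\<bar>p\<bar> \<le> x / 6" and qb: "\<bar>q\<bar> \<le> x / 6" using a b unfolding p_def q_def by auto
  have Qeq: "a\<^sup>2 + a * b + b\<^sup>2 - 4 * x * (a + b) + 4 * x\<^sup>2 = - (x\<^sup>2 + x * p + x * q - (p * p + p * q + q * q))"
    unfolding p_def q_def by (simp add: power2_eq_square algebra_simps)
  have h1: "\<bar>x * p\<bar> \<le> x * (x / 6)" unfolding abs_mult using mult_left_mono[OF pa x] x by simp
  have h2: "\<bar>x * q\<bar> \<le> x * (x / 6)" unfolding abs_mult using mult_left_mono[OF qb x] x by simp
  have h3: "\<bar>p * p\<bar> \<le> (x / 6) * (x / 6)" unfolding abs_mult using pa by (intro mult_mono) auto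
  have h4: "\<bar>p * q\<bar> \<le> (x / 6) * (x / 6)" unfolding abs_mult using pa qb by (intro mult_mono) auto
  have h5: "\<bar>q * q\<bar> \<le> (x / 6) * (x / 6)" unfolding abs_mult using qb by (intro mult_mono) auto
  have Qb: "7 / 12 * x\<^sup>2 \<le> x\<^sup>2 + x * p + x * q - (p * p + p * q + q * q)"
    using h1 h2 h3 h4 h5 by (simp add: power2_eq_square abs_le_iff)
  have "\<bar>Psi x a - Psi x b\<bar> = 3/4 * \<bar>a - b\<bar> * \<bar>x\<^sup>2 + x * p + x * q - (p * p + p * q + q * q)\<bar>"
  proof -
    have e: "Psi x a - Psi x b = 3/4 * (a - b) * (x\<^sup>2 + x * p + x * q - (p * p + p * q + q * q))"
      unfolding psi_diff Qeq by (simp add: algebra_simps)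
    show ?thesis unfolding e abs_mult by simp
  qed
  also have "\<dots> \<ge> 3/4 * \<bar>a - b\<bar> * (7 / 12 * x\<^sup>2)"
    using Qb abs_ge_self[of "x\<^sup>2 + x * p + x * q - (p * p + p * q + q * q)"]
    by (intro mult_left_mono) auto
  finally have "3/4 * \<bar>a - b\<bar> * (7 / 12 * x\<^sup>2) \<le> \<bar>Psi x a - Psi x b\<bar>" .
  then have "7 * (x\<^sup>2 * \<bar>a - b\<bar>) \<le> 16 * \<bar>Psi x a - Psi x b\<bar>" by (simp add: algebra_simps)
  moreover have "\<And>X Y :: real. 7 * X \<le> 16 * Y \<Longrightarrow> 0 \<le> Y \<Longrightarrow> X \<le> 3 * Y" by linarith
  ultimately show ?thesis using abs_ge_zero[of "Psi x a - Psi x b"] by blast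
qed
lemma div_helper:
  fixes A B s :: real
  shows "0 < s \<Longrightarrow> A \<le> 6 * B \<Longrightarrow> A / s \<le> 12 * (B / (2 * s))"
proof -
  assume s: "0 < s" and AB: "A \<le> 6 * B"
  have "A / s \<le> (6 * B) / s" using s AB by (intro divide_right_mono) auto
  also have "\<dots> = 12 * (B / (2 * s))" by simp
  finally show ?thesis .
qed

lemma sq_sqrt_mult: "0 \<le> u \<Longrightarrow> (sqrt u * v)\<^sup>2 = u * v\<^sup>2"
  by (simp add: power_mult_distrib)

lemma piece1:
  assumes mu: "0 < \<mu>" "\<mu> < 1/2" and x: "0 \<le> x" and r: "0 \<le> r"
  shows "(\<integral>\<^sup>+t. ennreal (wgt \<mu> x t) * indicator ({t. \<bar>Psi x t - \<alpha>\<bar> < M} \<inter> {-r<..<0}) t \<partial>lborel)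
         \<le> ennreal (12 * sqrt (6 * M))"
proof (rule piece_E[where \<phi> = "\<lambda>t. - (sqrt (- t) * (2 * x - t))" and \<phi>' = "\<lambda>t. (2 * x - 3 * t) / (2 * sqrt (- t))"])
  show "- r \<le> 0" using r by simp
  show "continuous_on {-r..0} (\<lambda>t. - (sqrt (- t) * (2 * x - t)))"
    by (intro continuous_intros)
  fix t assume t: "t \<in> {-r<..<0}"
  then have t0: "t < 0" by simp
  show "((\<lambda>t. - (sqrt (- t) * (2 * x - t))) has_real_derivative (2 * x - 3 * t) / (2 * sqrt (- t))) (at t)"
    by (rule d1[OF t0])
  show "0 \<le> (2 * x - 3 * t) / (2 * sqrt (- t))" using t0 x by simp
  have "wgt \<mu> x t \<le> max (\<bar>x\<bar>) (\<bar>t\<bar>) * 6 / sqrt \<bar>t\<bar>"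
    using t0 x by (intro wgt_le V_le6 mu) auto
  also have "\<dots> = max x (- t) * 6 / sqrt (- t)" using t0 x by simp
  also have "\<dots> \<le> 12 * ((2 * x - 3 * t) / (2 * sqrt (- t)))"
    using t0 x by (intro div_helper) (auto simp: max_def)
  finally show "wgt \<mu> x t \<le> 12 * ((2 * x - 3 * t) / (2 * sqrt (- t)))" .
next
  fix a b assume a: "a \<in> {-r<..<0}" and b: "b \<in> {-r<..<0}"
  show "((- (sqrt (- a) * (2 * x - a))) - (- (sqrt (- b) * (2 * x - b))))\<^sup>2 \<le> 3 * \<bar>Psi x a - Psi x b\<bar>"
  proof (rule piece_sq[where k = "4/3" and cc = 0])
    show "0 \<le> - (sqrt (- a) * (2 * x - a)) * - (sqrt (- b) * (2 * x - b))"
      using a b x by simp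
    have "(- (sqrt (- a) * (2 * x - a)))\<^sup>2 = (- a) * (2 * x - a)\<^sup>2"
      using a by (simp add: power_mult_distrib)
    then show "(- (sqrt (- a) * (2 * x - a)))\<^sup>2 = 4/3 * Psi x a + 0"
      by (simp add: Psi_def power2_eq_square algebra_simps)
    have "(- (sqrt (- b) * (2 * x - b)))\<^sup>2 = (- b) * (2 * x - b)\<^sup>2"
      using b by (simp add: power_mult_distrib)
    then show "(- (sqrt (- b) * (2 * x - b)))\<^sup>2 = 4/3 * Psi x b + 0"
      by (simp add: Psi_def power2_eq_square algebra_simps)
  qed simp
qed
lemma piece2:
  assumes mu: "0 < \<mu>" "\<mu> < 1/2" and x: "0 \<le> x"
  shows "(\<integral>\<^sup>+t. ennreal (wgt \<mu> x t) * indicator ({t. \<bar>Psi x t - \<alpha>\<bar> < M} \<inter> {0<..<x/3}) t \<partial>lborel)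
         \<le> ennreal (12 * sqrt (6 * M))"
proof (rule piece_E[where \<phi> = "\<lambda>t. sqrt t * (2 * x - t)" and \<phi>' = "\<lambda>t. (2 * x - 3 * t) / (2 * sqrt t)"])
  show "0 \<le> x / 3" using x by simp
  show "continuous_on {0..x/3} (\<lambda>t. sqrt t * (2 * x - t))"
    by (intro continuous_intros)
  fix t assume t: "t \<in> {0<..<x/3}"
  then have t0: "0 < t" "t < x / 3" by auto
  show "((\<lambda>t. sqrt t * (2 * x - t)) has_real_derivative (2 * x - 3 * t) / (2 * sqrt t)) (at t)"
    by (rule d2[OF t0(1)])
  show "0 \<le> (2 * x - 3 * t) / (2 * sqrt t)" using t0 x by simp
  have "wgt \<mu> x t \<le> max (\<bar>x\<bar>) (\<bar>t\<bar>) * 6 / sqrt \<bar>t\<bar>"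
    using t0 x by (intro wgt_le V_le6 mu) auto
  also have "\<dots> = (x * 6) / sqrt t" using t0 x by (simp add: max_def)
  also have "\<dots> \<le> 12 * ((2 * x - 3 * t) / (2 * sqrt t))"
    using t0 x by (intro div_helper) auto
  finally show "wgt \<mu> x t \<le> 12 * ((2 * x - 3 * t) / (2 * sqrt t))" .
next
  fix a b assume a: "a \<in> {0<..<x/3}" and b: "b \<in> {0<..<x/3}"
  show "(sqrt a * (2 * x - a) - sqrt b * (2 * x - b))\<^sup>2 \<le> 3 * \<bar>Psi x a - Psi x b\<bar>"
  proof (rule piece_sq[where k = "-4/3" and cc = 0])
    show "0 \<le> (sqrt a * (2 * x - a)) * (sqrt b * (2 * x - b))"
      using a b x by simp
    have "(sqrt a * (2 * x - a))\<^sup>2 = a * (2 * x - a)\<^sup>2"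
      using a by (simp add: power_mult_distrib)
    then show "(sqrt a * (2 * x - a))\<^sup>2 = -4/3 * Psi x a + 0"
      by (simp add: Psi_def power2_eq_square algebra_simps)
    have "(sqrt b * (2 * x - b))\<^sup>2 = b * (2 * x - b)\<^sup>2"
      using b by (simp add: power_mult_distrib)
    then show "(sqrt b * (2 * x - b))\<^sup>2 = -4/3 * Psi x b + 0"
      by (simp add: Psi_def power2_eq_square algebra_simps)
  qed simp
qed

lemma poly3:
  fixes x t :: real
  assumes "0 \<le> x" "x / 3 \<le> t" "t \<le> 5 * x / 6"
  shows "(x * 6)\<^sup>2 * (8 * x / 3 - t) \<le> 36 * (6 * x - 3 * t)\<^sup>2 * t"
proof -
  have "x\<^sup>2 * (8 * x / 3 - t) \<le> x\<^sup>2 * (7 * x / 3)" using assms by (intro mult_left_mono) auto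
  moreover have "(7 * x / 2)\<^sup>2 \<le> (6 * x - 3 * t)\<^sup>2" using assms by (intro power_mono) auto
  then have "(7 * x / 2)\<^sup>2 * (x / 3) \<le> (6 * x - 3 * t)\<^sup>2 * t" using assms by (intro mult_mono) auto
  moreover have "x\<^sup>2 * (7 * x / 3) \<le> (7 * x / 2)\<^sup>2 * (x / 3)"
    using assms by (simp add: power2_eq_square algebra_simps)
  ultimately have "x\<^sup>2 * (8 * x / 3 - t) \<le> (6 * x - 3 * t)\<^sup>2 * t" by linarith
  then show ?thesis by (simp add: power_mult_distrib)
qed

lemma phi3_sq:
  fixes x a :: real
  assumes "a \<le> 8 * x / 3"
  shows "((a - 2 * x / 3) * sqrt (8 * x / 3 - a))\<^sup>2 = 4/3 * Psi x a + 32 * x^3 / 27"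
proof -
  have "((a - 2 * x / 3) * sqrt (8 * x / 3 - a))\<^sup>2 = (a - 2 * x / 3)\<^sup>2 * (8 * x / 3 - a)"
    using assms by (simp add: power_mult_distrib)
  also have "\<dots> = 4/3 * Psi x a + 32 * x^3 / 27"
    unfolding Psi_def power2_eq_square power3_eq_cube by algebra
  finally show ?thesis .
qed

lemma piece34:
  assumes mu: "0 < \<mu>" "\<mu> < 1/2" and x: "0 \<le> x"
    and cd: "x / 3 \<le> c" "c \<le> d" "d \<le> 5 * x / 6"
    and sgn: "\<And>a b. a \<in> {c<..<d} \<Longrightarrow> b \<in> {c<..<d} \<Longrightarrow> 0 \<le> (a - 2 * x / 3) * (b - 2 * x / 3)"
  shows "(\<integral>\<^sup>+t. ennreal (wgt \<mu> x t) * indicator ({t. \<bar>Psi x t - \<alpha>\<bar> < M} \<inter> {c<..<d}) t \<partial>lborel)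
         \<le> ennreal (12 * sqrt (6 * M))"
proof (rule piece_E[where \<phi> = "\<lambda>t. (t - 2 * x / 3) * sqrt (8 * x / 3 - t)" and \<phi>' = "\<lambda>t. (6 * x - 3 * t) / (2 * sqrt (8 * x / 3 - t))"])
  show "c \<le> d" by (rule cd)
  show "continuous_on {c..d} (\<lambda>t. (t - 2 * x / 3) * sqrt (8 * x / 3 - t))"
    by (intro continuous_intros)
  fix t assume t: "t \<in> {c<..<d}"
  then have t0: "x / 3 < t" "t < 5 * x / 6" using cd by auto
  then have xp: "0 < x" by linarith
  show "((\<lambda>t. (t - 2 * x / 3) * sqrt (8 * x / 3 - t)) has_real_derivative (6 * x - 3 * t) / (2 * sqrt (8 * x / 3 - t))) (at t)"
    by (rule d3) (use t0 xp in linarith)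
  show "0 \<le> (6 * x - 3 * t) / (2 * sqrt (8 * x / 3 - t))" using t0 x by simp
  have "wgt \<mu> x t \<le> max (\<bar>x\<bar>) (\<bar>t\<bar>) * 6 / sqrt \<bar>t\<bar>"
    using t0 x by (intro wgt_le V_le6 mu) auto
  also have "\<dots> = (x * 6) / sqrt t" using t0 x by (simp add: max_def)
  also have "\<dots> \<le> 12 * ((6 * x - 3 * t) / (2 * sqrt (8 * x / 3 - t)))"
    using t0 x poly3[of x t] by (intro cmp_helper) auto
  finally show "wgt \<mu> x t \<le> 12 * ((6 * x - 3 * t) / (2 * sqrt (8 * x / 3 - t)))" .
next
  fix a b assume a: "a \<in> {c<..<d}" and b: "b \<in> {c<..<d}"
  have a8: "a \<le> 8 * x / 3" and b8: "b \<le> 8 * x / 3" using a b cd x by auto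
  show "((a - 2 * x / 3) * sqrt (8 * x / 3 - a) - (b - 2 * x / 3) * sqrt (8 * x / 3 - b))\<^sup>2 \<le> 3 * \<bar>Psi x a - Psi x b\<bar>"
  proof (rule piece_sq[where k = "4/3" and cc = "32 * x^3 / 27"])
    have "0 \<le> ((a - 2 * x / 3) * (b - 2 * x / 3)) * (sqrt (8 * x / 3 - a) * sqrt (8 * x / 3 - b))"
      by (rule mult_nonneg_nonneg[OF sgn[OF a b]]) (use a8 b8 in simp)
    then show "0 \<le> ((a - 2 * x / 3) * sqrt (8 * x / 3 - a)) * ((b - 2 * x / 3) * sqrt (8 * x / 3 - b))"
      by (simp add: algebra_simps)
  qed (use phi3_sq[OF a8] phi3_sq[OF b8] in auto)
qed
lemma piece78:
  assumes mu: "0 < \<mu>" "\<mu> < 1/2" and x: "0 \<le> x"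
    and cd: "7 * x / 6 \<le> c" "c \<le> d"
    and sgn: "\<And>a b. a \<in> {c<..<d} \<Longrightarrow> b \<in> {c<..<d} \<Longrightarrow> 0 \<le> (a - 2 * x) * (b - 2 * x)"
  shows "(\<integral>\<^sup>+t. ennreal (wgt \<mu> x t) * indicator ({t. \<bar>Psi x t - \<alpha>\<bar> < M} \<inter> {c<..<d}) t \<partial>lborel)
         \<le> ennreal (12 * sqrt (6 * M))"
proof (rule piece_E[where \<phi> = "\<lambda>t. sqrt t * (t - 2 * x)" and \<phi>' = "\<lambda>t. (3 * t - 2 * x) / (2 * sqrt t)"])
  show "c \<le> d" by (rule cd)
  show "continuous_on {c..d} (\<lambda>t. sqrt t * (t - 2 * x))"
    by (intro continuous_intros)
  fix t assume t: "t \<in> {c<..<d}"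
  then have t0: "7 * x / 6 < t" using cd by auto
  have tp: "0 < t" using t0 x by linarith
  show "((\<lambda>t. sqrt t * (t - 2 * x)) has_real_derivative (3 * t - 2 * x) / (2 * sqrt t)) (at t)"
    by (rule d7[OF tp])
  show "0 \<le> (3 * t - 2 * x) / (2 * sqrt t)" using t0 x by simp
  have "wgt \<mu> x t \<le> max (\<bar>x\<bar>) (\<bar>t\<bar>) * 6 / sqrt \<bar>t\<bar>"
    using t0 x by (intro wgt_le V_le6 mu) auto
  also have "\<dots> = (t * 6) / sqrt t" using t0 x by (simp add: max_def)
  also have "\<dots> \<le> 12 * ((3 * t - 2 * x) / (2 * sqrt t))"
    using t0 x by (intro div_helper) auto
  finally show "wgt \<mu> x t \<le> 12 * ((3 * t - 2 * x) / (2 * sqrt t))" .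
next
  fix a b assume a: "a \<in> {c<..<d}" and b: "b \<in> {c<..<d}"
  have a0: "0 \<le> a" and b0: "0 \<le> b" using a b cd x by auto
  show "(sqrt a * (a - 2 * x) - sqrt b * (b - 2 * x))\<^sup>2 \<le> 3 * \<bar>Psi x a - Psi x b\<bar>"
  proof (rule piece_sq[where k = "-4/3" and cc = 0])
    have "0 \<le> ((a - 2 * x) * (b - 2 * x)) * (sqrt a * sqrt b)"
      by (rule mult_nonneg_nonneg[OF sgn[OF a b]]) (use a0 b0 in simp)
    then show "0 \<le> (sqrt a * (a - 2 * x)) * (sqrt b * (b - 2 * x))"
      by (simp add: algebra_simps)
    have "(sqrt a * (a - 2 * x))\<^sup>2 = a * (a - 2 * x)\<^sup>2"
      using a0 by (simp add: power_mult_distrib)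
    then show "(sqrt a * (a - 2 * x))\<^sup>2 = -4/3 * Psi x a + 0"
      by (simp add: Psi_def power2_eq_square algebra_simps)
    have "(sqrt b * (b - 2 * x))\<^sup>2 = b * (b - 2 * x)\<^sup>2"
      using b0 by (simp add: power_mult_distrib)
    then show "(sqrt b * (b - 2 * x))\<^sup>2 = -4/3 * Psi x b + 0"
      by (simp add: Psi_def power2_eq_square algebra_simps)
  qed simp
qed

lemma piece5:
  assumes mu: "0 < \<mu>" "\<mu> < 1/2" and x: "0 \<le> x"
  shows "(\<integral>\<^sup>+t. ennreal (wgt \<mu> x t) * indicator ({t. \<bar>Psi x t - \<alpha>\<bar> < M} \<inter> {5*x/6<..<x}) t \<partial>lborel)
         \<le> ennreal (12 * sqrt (6 * M))"
proof (rule piece_E[where \<phi> = "\<lambda>t. - (x * sqrt (x - t))" and \<phi>' = "\<lambda>t. x / (2 * sqrt (x - t))"])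
  show "5 * x / 6 \<le> x" using x by simp
  show "continuous_on {5*x/6..x} (\<lambda>t. - (x * sqrt (x - t)))"
    by (intro continuous_intros)
  fix t assume t: "t \<in> {5*x/6<..<x}"
  then have t0: "5 * x / 6 < t" "t < x" by auto
  have tp: "0 < t" using t0 x by linarith
  show "((\<lambda>t. - (x * sqrt (x - t))) has_real_derivative x / (2 * sqrt (x - t))) (at t)"
    by (rule d5[OF t0(2)])
  show "0 \<le> x / (2 * sqrt (x - t))" using t0 x by simp
  define V where "V = (japbr x / japbr (x - t)) powr \<mu>"
  have V0: "0 \<le> V" unfolding V_def by simp
  have V2: "V\<^sup>2 * \<bar>x - t\<bar> \<le> 2 * x" unfolding V_def using t0 x by (intro V_sq_near mu) auto
  have "wgt \<mu> x t \<le> max (\<bar>x\<bar>) (\<bar>t\<bar>) * V / sqrt \<bar>t\<bar>"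
    using t0 x unfolding V_def by (intro wgt_le) auto
  also have "\<dots> = (x * V) / sqrt t" using t0 x by (simp add: max_def)
  also have "\<dots> \<le> 12 * (x / (2 * sqrt (x - t)))"
  proof (rule cmp_helper)
    have "(x * V)\<^sup>2 * (x - t) = x\<^sup>2 * (V\<^sup>2 * \<bar>x - t\<bar>)" using t0 by (simp add: power_mult_distrib)
    also have "\<dots> \<le> x\<^sup>2 * (2 * x)" using V2 by (intro mult_left_mono) auto
    also have "\<dots> \<le> x\<^sup>2 * (36 * t)" using t0 x by (intro mult_left_mono) auto
    finally show "(x * V)\<^sup>2 * (x - t) \<le> 36 * x\<^sup>2 * t" by (simp add: algebra_simps)
  qed (use t0 x tp V0 in auto)
  finally show "wgt \<mu> x t \<le> 12 * (x / (2 * sqrt (x - t)))" .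
next
  fix a b assume a: "a \<in> {5*x/6<..<x}" and b: "b \<in> {5*x/6<..<x}"
  have "(- (x * sqrt (x - a)) - - (x * sqrt (x - b)))\<^sup>2 = x\<^sup>2 * (sqrt (x - a) - sqrt (x - b))\<^sup>2"
    by (simp add: power2_eq_square algebra_simps)
  also have "\<dots> \<le> x\<^sup>2 * \<bar>(x - a) - (x - b)\<bar>" using a b by (intro mult_left_mono sqrt_diff_sq) auto
  also have "\<dots> = x\<^sup>2 * \<bar>a - b\<bar>" by (simp add: abs_minus_commute)
  also have "\<dots> \<le> 3 * \<bar>Psi x a - Psi x b\<bar>" using a b x by (intro psi_lip) auto
  finally show "(- (x * sqrt (x - a)) - - (x * sqrt (x - b)))\<^sup>2 \<le> 3 * \<bar>Psi x a - Psi x b\<bar>" .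
qed

lemma piece6:
  assumes mu: "0 < \<mu>" "\<mu> < 1/2" and x: "0 \<le> x"
  shows "(\<integral>\<^sup>+t. ennreal (wgt \<mu> x t) * indicator ({t. \<bar>Psi x t - \<alpha>\<bar> < M} \<inter> {x<..<7*x/6}) t \<partial>lborel)
         \<le> ennreal (12 * sqrt (6 * M))"
proof (rule piece_E[where \<phi> = "\<lambda>t. x * sqrt (t - x)" and \<phi>' = "\<lambda>t. x / (2 * sqrt (t - x))"])
  show "x \<le> 7 * x / 6" using x by simp
  show "continuous_on {x..7*x/6} (\<lambda>t. x * sqrt (t - x))"
    by (intro continuous_intros)
  fix t assume t: "t \<in> {x<..<7*x/6}"
  then have t0: "x < t" "t < 7 * x / 6" by auto
  have tp: "0 < t" using t0 x by linarith
  show "((\<lambda>t. x * sqrt (t - x)) has_real_derivative x / (2 * sqrt (t - x))) (at t)"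
    by (rule d6[OF t0(1)])
  show "0 \<le> x / (2 * sqrt (t - x))" using t0 x by simp
  define V where "V = (japbr x / japbr (x - t)) powr \<mu>"
  have V0: "0 \<le> V" unfolding V_def by simp
  have V2: "V\<^sup>2 * \<bar>x - t\<bar> \<le> 2 * x" unfolding V_def using t0 x by (intro V_sq_near mu) auto
  have "wgt \<mu> x t \<le> max (\<bar>x\<bar>) (\<bar>t\<bar>) * V / sqrt \<bar>t\<bar>"
    using t0 x unfolding V_def by (intro wgt_le) auto
  also have "\<dots> = (t * V) / sqrt t" using t0 x by (simp add: max_def)
  also have "\<dots> \<le> 12 * (x / (2 * sqrt (t - x)))"
  proof (rule cmp_helper)
    have "(t * V)\<^sup>2 * (t - x) = t\<^sup>2 * (V\<^sup>2 * \<bar>x - t\<bar>)" using t0 by (simp add: power_mult_distrib)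
    also have "\<dots> \<le> t\<^sup>2 * (2 * x)" using V2 by (intro mult_left_mono) auto
    also have "\<dots> = t * (2 * x * t)" by (simp add: power2_eq_square)
    also have "\<dots> \<le> t * (36 * x * x)" using t0 x tp by (intro mult_left_mono mult_left_mono) auto
    finally show "(t * V)\<^sup>2 * (t - x) \<le> 36 * x\<^sup>2 * t" by (simp add: power2_eq_square algebra_simps)
  qed (use t0 x tp V0 in auto)
  finally show "wgt \<mu> x t \<le> 12 * (x / (2 * sqrt (t - x)))" .
next
  fix a b assume a: "a \<in> {x<..<7*x/6}" and b: "b \<in> {x<..<7*x/6}"
  have "(x * sqrt (a - x) - x * sqrt (b - x))\<^sup>2 = x\<^sup>2 * (sqrt (a - x) - sqrt (b - x))\<^sup>2"
    by (simp add: power2_eq_square algebra_simps)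
  also have "\<dots> \<le> x\<^sup>2 * \<bar>(a - x) - (b - x)\<bar>" using a b by (intro mult_left_mono sqrt_diff_sq) auto
  also have "\<dots> = x\<^sup>2 * \<bar>a - b\<bar>" by simp
  also have "\<dots> \<le> 3 * \<bar>Psi x a - Psi x b\<bar>" using a b x by (intro psi_lip) auto
  finally show "(x * sqrt (a - x) - x * sqrt (b - x))\<^sup>2 \<le> 3 * \<bar>Psi x a - Psi x b\<bar>" .
qed
lemma wgt_meas[measurable]: "(\<lambda>t. wgt \<mu> x t) \<in> borel_measurable borel"
proof -
  have e: "(\<lambda>t. wgt \<mu> x t) = (\<lambda>t. (max \<bar>x\<bar> \<bar>t\<bar> * japbr x powr \<mu>) / (sqrt \<bar>t\<bar> * japbr (x - t) powr \<mu>))"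
    unfolding wgt_def by (intro ext) (simp only: powr_half_sqrt abs_ge_zero)
  have c1: "continuous_on UNIV (\<lambda>t. max \<bar>x\<bar> \<bar>t\<bar> * japbr x powr \<mu>)" by (intro continuous_intros)
  have c0: "continuous_on UNIV (\<lambda>t. japbr (x - t))" unfolding japbr_def by (intro continuous_intros)
  have c2: "continuous_on UNIV (\<lambda>t. sqrt \<bar>t\<bar> * japbr (x - t) powr \<mu>)"
    by (intro continuous_intros c0) (auto simp: japbr_pos[THEN less_imp_neq, symmetric])
  show ?thesis unfolding e by (intro borel_measurable_divide borel_measurable_continuous_onI c1 c2)
qed
lemma E_open: "open {t. \<bar>Psi x t - \<alpha>\<bar> < M}"
  unfolding Psi_def by (intro open_Collect_less continuous_intros)

lemma g_meas: "(\<lambda>t. ennreal (wgt \<mu> x t) * indicator ({t. \<bar>Psi x t - \<alpha>\<bar> < M} \<inter> {c<..<d}) t) \<in> borel_measurable lborel"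
proof -
  have "{t. \<bar>Psi x t - \<alpha>\<bar> < M} \<inter> {c<..<d} \<in> sets borel"
    using E_open by (intro sets.Int borel_open) auto
  then show ?thesis by measurable
qed

lemma add_le_int:
  fixes f g :: "real \<Rightarrow> ennreal"
  assumes "f \<in> borel_measurable lborel" "g \<in> borel_measurable lborel"
    "(\<integral>\<^sup>+t. f t \<partial>lborel) \<le> A" "(\<integral>\<^sup>+t. g t \<partial>lborel) \<le> B"
  shows "(\<integral>\<^sup>+t. f t + g t \<partial>lborel) \<le> A + B"
proof -
  have "(\<integral>\<^sup>+t. f t + g t \<partial>lborel) = (\<integral>\<^sup>+t. f t \<partial>lborel) + (\<integral>\<^sup>+t. g t \<partial>lborel)"
    by (rule nn_integral_add) (use assms in auto)
  also have "\<dots> \<le> A + B" by (rule add_mono[OF assms(3,4)])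
  finally show ?thesis .
qed
lemma E_bounded:
  fixes x \<alpha> M :: real
  assumes x: "0 \<le> x" and M: "0 < M" and r: "r = 4/3 * (\<bar>\<alpha>\<bar> + M) + 1"
    and tE: "\<bar>Psi x t - \<alpha>\<bar> < M"
  shows "- r < t" "t < 2 * x + r"
proof -
  have r1: "1 \<le> r" using r M by simp
  have r34: "3/4 * r = \<bar>\<alpha>\<bar> + M + 3/4" using r by (simp add: algebra_simps)
  have ab: "- M < Psi x t - \<alpha>" "Psi x t - \<alpha> < M" using tE by auto
  show "- r < t"
  proof (rule ccontr)
    assume "\<not> - r < t"
    then have u: "r \<le> - t" by simp
    have "1 \<le> (2 * x - t)\<^sup>2" using u r1 x by (intro one_le_power) auto
    then have "(- t) * 1 \<le> (- t) * (2 * x - t)\<^sup>2" using u r1 by (intro mult_left_mono) auto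
    moreover have "Psi x t = 3/4 * ((- t) * (2 * x - t)\<^sup>2)" unfolding Psi_def by (simp add: power2_eq_square algebra_simps)
    ultimately have "3/4 * r \<le> Psi x t" using u by linarith
    then show False using ab r34 abs_ge_self[of \<alpha>] by linarith
  qed
  show "t < 2 * x + r"
  proof (rule ccontr)
    assume "\<not> t < 2 * x + r"
    then have u: "r \<le> t - 2 * x" by simp
    have "1 \<le> (t - 2 * x)\<^sup>2" using u r1 x by (intro one_le_power) auto
    then have "t * 1 \<le> t * (t - 2 * x)\<^sup>2" using u r1 x by (intro mult_left_mono) auto
    moreover have "Psi x t = - 3/4 * (t * (t - 2 * x)\<^sup>2)" unfolding Psi_def by (simp add: algebra_simps)
    ultimately have "Psi x t \<le> - (3/4) * r" using u x by linarith
    then show False using ab r34 abs_ge_self[of "-\<alpha>"] by linarith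
  qed
qed
lemma ennreal_ind: "ennreal (a * indicator S t) = ennreal a * indicator S t"
  by (simp add: indicator_def)

lemma h_meas: "(\<lambda>t. ennreal (wgt \<mu> x t * indicator ({t. \<bar>Psi x t - \<alpha>\<bar> < M} \<inter> {c<..<d}) t)) \<in> borel_measurable lborel"
  unfolding ennreal_ind by (rule g_meas)

lemma h_int: "(\<integral>\<^sup>+t. ennreal (wgt \<mu> x t * indicator ({t. \<bar>Psi x t - \<alpha>\<bar> < M} \<inter> {c<..<d}) t) \<partial>lborel)
  = (\<integral>\<^sup>+t. ennreal (wgt \<mu> x t) * indicator ({t. \<bar>Psi x t - \<alpha>\<bar> < M} \<inter> {c<..<d}) t \<partial>lborel)"
  unfolding ennreal_ind ..

lemma main_nonneg:
  assumes mu: "0 < \<mu>" "\<mu> < 1/2" and x: "0 \<le> x" and M: "0 < M"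
  shows "(\<integral>\<^sup>+t. ennreal (wgt \<mu> x t * indicator {t. \<bar>Psi x t - \<alpha>\<bar> < M} t) \<partial>lborel)
         \<le> ennreal (12 * sqrt (6 * M)) + (ennreal (12 * sqrt (6 * M)) + (ennreal (12 * sqrt (6 * M)) + (ennreal (12 * sqrt (6 * M))
          + (ennreal (12 * sqrt (6 * M)) + (ennreal (12 * sqrt (6 * M)) + (ennreal (12 * sqrt (6 * M)) + ennreal (12 * sqrt (6 * M))))))))"
proof -
  define r where "r = 4/3 * (\<bar>\<alpha>\<bar> + M) + 1"
  have r0: "0 \<le> r" using M by (simp add: r_def)
  define E where "E = {t. \<bar>Psi x t - \<alpha>\<bar> < M}"
  define h where "h c d t = wgt \<mu> x t * indicator (E \<inter> {c<..<d}) t" for c d t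
  have hnn: "0 \<le> h c d t" for c d t unfolding h_def by (simp add: wgt_nonneg)
  have hm: "(\<lambda>t. ennreal (h c d t)) \<in> borel_measurable lborel" for c d
    unfolding h_def E_def by (rule h_meas)
  define B where "B = ennreal (12 * sqrt (6 * M))"
  have P1: "(\<integral>\<^sup>+t. ennreal (h (-r) 0 t) \<partial>lborel) \<le> B"
    unfolding h_def E_def B_def h_int by (rule piece1[OF mu x r0])
  have P2: "(\<integral>\<^sup>+t. ennreal (h 0 (x/3) t) \<partial>lborel) \<le> B"
    unfolding h_def E_def B_def h_int by (rule piece2[OF mu x])
  have P3: "(\<integral>\<^sup>+t. ennreal (h (x/3) (2*x/3) t) \<partial>lborel) \<le> B"
    unfolding h_def E_def B_def h_int by (rule piece34[OF mu x]) (use x in \<open>auto intro: mult_nonpos_nonpos\<close>)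
  have P4: "(\<integral>\<^sup>+t. ennreal (h (2*x/3) (5*x/6) t) \<partial>lborel) \<le> B"
    unfolding h_def E_def B_def h_int by (rule piece34[OF mu x]) (use x in \<open>auto intro: mult_nonneg_nonneg\<close>)
  have P5: "(\<integral>\<^sup>+t. ennreal (h (5*x/6) x t) \<partial>lborel) \<le> B"
    unfolding h_def E_def B_def h_int by (rule piece5[OF mu x])
  have P6: "(\<integral>\<^sup>+t. ennreal (h x (7*x/6) t) \<partial>lborel) \<le> B"
    unfolding h_def E_def B_def h_int by (rule piece6[OF mu x])
  have P7: "(\<integral>\<^sup>+t. ennreal (h (7*x/6) (2*x) t) \<partial>lborel) \<le> B"
    unfolding h_def E_def B_def h_int by (rule piece78[OF mu x]) (use x in \<open>auto intro: mult_nonpos_nonpos\<close>)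
  have P8: "(\<integral>\<^sup>+t. ennreal (h (2*x) (2*x+r) t) \<partial>lborel) \<le> B"
    unfolding h_def E_def B_def h_int by (rule piece78[OF mu x]) (use x r0 in \<open>auto intro: mult_nonneg_nonneg\<close>)
  have pw: "AE t in lborel. ennreal (wgt \<mu> x t * indicator E t) \<le>
      ennreal (h (-r) 0 t) + (ennreal (h 0 (x/3) t) + (ennreal (h (x/3) (2*x/3) t) + (ennreal (h (2*x/3) (5*x/6) t)
      + (ennreal (h (5*x/6) x t) + (ennreal (h x (7*x/6) t) + (ennreal (h (7*x/6) (2*x) t) + ennreal (h (2*x) (2*x+r) t)))))))"
    using AE_lborel_singleton[of 0] AE_lborel_singleton[of "x/3"] AE_lborel_singleton[of "2*x/3"]
      AE_lborel_singleton[of "5*x/6"] AE_lborel_singleton[of x] AE_lborel_singleton[of "7*x/6"]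
      AE_lborel_singleton[of "2*x"]
  proof eventually_elim
    case (elim t)
    have real_le: "wgt \<mu> x t * indicator E t \<le>
      h (-r) 0 t + (h 0 (x/3) t + (h (x/3) (2*x/3) t + (h (2*x/3) (5*x/6) t
      + (h (5*x/6) x t + (h x (7*x/6) t + (h (7*x/6) (2*x) t + h (2*x) (2*x+r) t))))))"
    proof (cases "t \<in> E")
      case False
      then show ?thesis using hnn[of "-r" 0 t] hnn[of 0 "x/3" t] hnn[of "x/3" "2*x/3" t] hnn[of "2*x/3" "5*x/6" t]
        hnn[of "5*x/6" x t] hnn[of x "7*x/6" t] hnn[of "7*x/6" "2*x" t] hnn[of "2*x" "2*x+r" t]
        by simp
    next
      case True
      then have tb: "- r < t" "t < 2 * x + r" using E_bounded[OF x M r_def] unfolding E_def by auto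
      have hv: "t \<in> {c<..<d} \<Longrightarrow> h c d t = wgt \<mu> x t" for c d unfolding h_def using True by simp
      have cases: "t \<in> {-r<..<0} \<or> t \<in> {0<..<x/3} \<or> t \<in> {x/3<..<2*x/3} \<or> t \<in> {2*x/3<..<5*x/6}
          \<or> t \<in> {5*x/6<..<x} \<or> t \<in> {x<..<7*x/6} \<or> t \<in> {7*x/6<..<2*x} \<or> t \<in> {2*x<..<2*x+r}"
        using tb elim x by auto
      show ?thesis using True cases hv hnn[of "-r" 0 t] hnn[of 0 "x/3" t] hnn[of "x/3" "2*x/3" t] hnn[of "2*x/3" "5*x/6" t]
        hnn[of "5*x/6" x t] hnn[of x "7*x/6" t] hnn[of "7*x/6" "2*x" t] hnn[of "2*x" "2*x+r" t]
        by (elim disjE) (simp_all add: indicator_def)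
    qed
    show ?case
      using real_le hnn by (simp add: ennreal_plus[symmetric] ennreal_leI del: ennreal_plus)
  qed
  have "(\<integral>\<^sup>+t. ennreal (wgt \<mu> x t * indicator {t. \<bar>Psi x t - \<alpha>\<bar> < M} t) \<partial>lborel) \<le>
      (\<integral>\<^sup>+t. ennreal (h (-r) 0 t) + (ennreal (h 0 (x/3) t) + (ennreal (h (x/3) (2*x/3) t) + (ennreal (h (2*x/3) (5*x/6) t)
      + (ennreal (h (5*x/6) x t) + (ennreal (h x (7*x/6) t) + (ennreal (h (7*x/6) (2*x) t) + ennreal (h (2*x) (2*x+r) t))))))) \<partial>lborel)"
    unfolding E_def[symmetric] by (rule nn_integral_mono_AE[OF pw])
  also have "\<dots> \<le> B + (B + (B + (B + (B + (B + (B + B))))))"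
    by (intro add_le_int borel_measurable_add hm P1 P2 P3 P4 P5 P6 P7 P8)
  finally show ?thesis unfolding B_def .
qed
lemma wgt_refl: "wgt \<mu> \<xi> (- \<eta>) = wgt \<mu> (- \<xi>) \<eta>"
proof -
  have "japbr (\<xi> - - \<eta>) = japbr (- \<xi> - \<eta>)" unfolding japbr_def by (simp add: power2_eq_square algebra_simps)
  moreover have "japbr \<xi> = japbr (- \<xi>)" unfolding japbr_def by simp
  ultimately show ?thesis unfolding wgt_def by simp
qed

lemma Psi_refl: "Psi \<xi> (- \<eta>) = - Psi (- \<xi>) \<eta>"
  unfolding Psi_def by (simp add: power2_eq_square algebra_simps)

lemma full_meas: "(\<lambda>t. ennreal (wgt \<mu> x t * indicator {t. \<bar>Psi x t - \<alpha>\<bar> < M} t)) \<in> borel_measurable borel"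
proof -
  have [measurable]: "{t. \<bar>Psi x t - \<alpha>\<bar> < M} \<in> sets borel"
    using E_open by (intro borel_open) auto
  show ?thesis by measurable
qed

lemma key_bound:
  assumes mu: "0 < \<mu>" "\<mu> < 1/2" and M: "0 < M"
  shows "(\<integral>\<^sup>+t. ennreal (wgt \<mu> x t * indicator {t. \<bar>Psi x t - \<alpha>\<bar> < M} t) \<partial>lborel)
         \<le> ennreal (96 * sqrt 6 * sqrt M)"
proof -
  define B where "B = 12 * sqrt (6 * M)"
  have B0: "0 \<le> B" unfolding B_def using M by simp
  have sumB: "ennreal B + (ennreal B + (ennreal B + (ennreal B + (ennreal B + (ennreal B + (ennreal B + ennreal B))))))
      = ennreal (96 * sqrt 6 * sqrt M)"
  proof -
    have "ennreal B + (ennreal B + (ennreal B + (ennreal B + (ennreal B + (ennreal B + (ennreal B + ennreal B))))))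
        = ennreal (B + (B + (B + (B + (B + (B + (B + B)))))))"
      using B0 by (simp add: ennreal_plus[symmetric] del: ennreal_plus)
    also have "B + (B + (B + (B + (B + (B + (B + B)))))) = 96 * sqrt 6 * sqrt M"
      unfolding B_def by (simp add: real_sqrt_mult)
    finally show ?thesis .
  qed
  show ?thesis
  proof (cases "0 \<le> x")
    case True
    show ?thesis using main_nonneg[OF mu True M, of \<alpha>] unfolding sumB[unfolded B_def] .
  next
    case False
    have "(\<integral>\<^sup>+t. ennreal (wgt \<mu> x t * indicator {t. \<bar>Psi x t - \<alpha>\<bar> < M} t) \<partial>lborel)
        = (\<integral>\<^sup>+t. ennreal (wgt \<mu> x (- t) * indicator {t. \<bar>Psi x t - \<alpha>\<bar> < M} (- t)) \<partial>lborel)"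
      using nn_integral_real_affine[OF full_meas[of \<mu> x \<alpha> M], where c="-1" and t=0] by simp
    also have "\<dots> = (\<integral>\<^sup>+t. ennreal (wgt \<mu> (- x) t * indicator {t. \<bar>Psi (- x) t - (- \<alpha>)\<bar> < M} t) \<partial>lborel)"
    proof -
      have "\<And>t. indicator {t. \<bar>Psi x t - \<alpha>\<bar> < M} (- t) = (indicator {t. \<bar>Psi (- x) t - (- \<alpha>)\<bar> < M} t :: real)"
        by (simp add: indicator_def Psi_refl abs_minus_commute add.commute)
      then show ?thesis by (simp add: wgt_refl)
    qed
    also have "\<dots> \<le> ennreal (96 * sqrt 6 * sqrt M)"
      using main_nonneg[OF mu _ M, of "- x" "- \<alpha>"] False unfolding sumB[unfolded B_def] by simp
    finally show ?thesis .
  qed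
qed

theorem proposition3p7:
  fixes \<mu> :: real
  assumes "0 < \<mu>" and "\<mu> < 1/2"
  shows "\<exists>C>0. \<forall>M::real. M \<ge> 1 \<longrightarrow> (\<forall>\<xi> \<alpha> :: real.
           (\<integral>\<^sup>+ \<eta>. ennreal (max \<bar>\<xi>\<bar> \<bar>\<eta>\<bar> * japbr \<xi> powr \<mu>
                 / (\<bar>\<eta>\<bar> powr (1/2) * japbr (\<xi> - \<eta>) powr \<mu>)
                 * indicator {\<eta>. \<bar>Psi \<xi> \<eta> - \<alpha>\<bar> < M} \<eta>) \<partial>lborel)
           \<le> ennreal (C * sqrt M))"
proof (intro exI[of _ "96 * sqrt 6"] conjI allI impI)
  show "0 < 96 * sqrt (6::real)" by simp
  fix M \<xi> \<alpha> :: real assume M: "1 \<le> M"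
  have "(\<integral>\<^sup>+ \<eta>. ennreal (max \<bar>\<xi>\<bar> \<bar>\<eta>\<bar> * japbr \<xi> powr \<mu>
                 / (\<bar>\<eta>\<bar> powr (1/2) * japbr (\<xi> - \<eta>) powr \<mu>)
                 * indicator {\<eta>. \<bar>Psi \<xi> \<eta> - \<alpha>\<bar> < M} \<eta>) \<partial>lborel)
      = (\<integral>\<^sup>+t. ennreal (wgt \<mu> \<xi> t * indicator {t. \<bar>Psi \<xi> t - \<alpha>\<bar> < M} t) \<partial>lborel)"
    unfolding wgt_def ..
  also have "\<dots> \<le> ennreal (96 * sqrt 6 * sqrt M)"
    using M by (intro key_bound assms) auto
  finally show "(\<integral>\<^sup>+ \<eta>. ennreal (max \<bar>\<xi>\<bar> \<bar>\<eta>\<bar> * japbr \<xi> powr \<mu>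
                 / (\<bar>\<eta>\<bar> powr (1/2) * japbr (\<xi> - \<eta>) powr \<mu>)
                 * indicator {\<eta>. \<bar>Psi \<xi> \<eta> - \<alpha>\<bar> < M} \<eta>) \<partial>lborel)
           \<le> ennreal (96 * sqrt 6 * sqrt M)" .
qed

end
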